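(* Let $\mathcal{C}$ be a partition of a finite set $E$ (a covering by pairwise disjoint nonempty sets). Then $SH$, $XH$, $VH$ are closure operators of matroids on $E$, and $\mathcal{I}_{SH}(\mathcal{C})=\mathcal{I}_{XH}(\mathcal{C})=\mathcal{I}_{VH}(\mathcal{C})=\mathcal{I}(\mathcal{C})$ and $\mathcal{L}_{SH}(M(\mathcal{C}))=\mathcal{L}_{XH}(M(\mathcal{C}))=\mathcal{L}_{VH}(M(\mathcal{C}))=\mathcal{L}(M(\mathcal{C}))$.
   Context: For a covering $\mathcal{C}$ of $E$ and $x\in E$: $N(x)=\bigcap\{K\in\mathcal{C}:x\in K\}$. For $X\subseteq E$: $SH(X)=\bigcup\{K\in\mathcal{C}:K\cap X\neq\emptyset\}$, $XH(X)=\{x:N(x)\cap X\neq\emptyset\}$, $VH(X)=\bigcup\{N(x):N(x)\cap X\neq\emptyset\}$. When $H\in\{SH,XH,VH\}$ is the closure operator of a matroid on $E$, $\mathcal{I}_H(\mathcal{C})=\{I\subseteq E:x\notin H(I-\{x\})\ \forall x\in I\}$ is its family of independent sets and $\mathcal{L}_H(M(\mathcal{C}))=\{X:H(X)=X\}$ its set of closed sets. $\mathcal{I}(\mathcal{C})$ is the family of partial transversals of $\mathcal{C}$ (sets of distinct elements $e_1,\dots,e_k$ with $e_j\in K_{i_j}$ for distinct blocks $K_{i_1},\dots,K_{i_k}$), i.e. the independent sets of the transversal matroid $M(\mathcal{C})$, and $\mathcal{L}(M(\mathcal{C}))$ is the set of closed sets of $M(\mathcal{C})$, where $cl(X)=\{a:r(X\cup\{a\})=r(X)\}$.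 *)

theory Defs
  imports "HOL-Library.Disjoint_Sets"
begin

(* A covering C of E is a set of blocks with \<Union>C = E. *)

definition Nbh :: "'a set set \<Rightarrow> 'a \<Rightarrow> 'a set" where
  "Nbh C x = \<Inter>{K \<in> C. x \<in> K}"

definition SH :: "'a set set \<Rightarrow> 'a set \<Rightarrow> 'a set" where
  "SH C X = \<Union>{K \<in> C. K \<inter> X \<noteq> {}}"

definition XH :: "'a set set \<Rightarrow> 'a set \<Rightarrow> 'a set \<Rightarrow> 'a set" where
  "XH C E X = {x \<in> E. Nbh C x \<inter> X \<noteq> {}}"

definition VH :: "'a set set \<Rightarrow> 'a set \<Rightarrow> 'a set \<Rightarrow> 'a set" where
  "VH C E X = \<Union>{Nbh C x | x. x \<in> E \<and> Nbh C x \<inter> X \<noteq> {}}"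

definition matroid_closure :: "'a set \<Rightarrow> ('a set \<Rightarrow> 'a set) \<Rightarrow> bool" where
  "matroid_closure E cl \<longleftrightarrow>
     (\<forall>X. X \<subseteq> E \<longrightarrow> X \<subseteq> cl X \<and> cl X \<subseteq> E) \<and>
     (\<forall>X Y. X \<subseteq> Y \<and> Y \<subseteq> E \<longrightarrow> cl X \<subseteq> cl Y) \<and>
     (\<forall>X. X \<subseteq> E \<longrightarrow> cl (cl X) = cl X) \<and>
     (\<forall>X x y. X \<subseteq> E \<and> x \<in> E \<and> y \<in> E \<and> y \<in> cl (insert x X) \<and> y \<notin> cl X
        \<longrightarrow> x \<in> cl (insert y X))"

definition indep_H :: "'a set \<Rightarrow> ('a set \<Rightarrow> 'a set) \<Rightarrow> 'a set set" where
  "indep_H E H = {I. I \<subseteq> E \<and> (\<forall>x\<in>I. x \<notin> H (I - {x}))}"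

definition closed_H :: "'a set \<Rightarrow> ('a set \<Rightarrow> 'a set) \<Rightarrow> 'a set set" where
  "closed_H E H = {X. X \<subseteq> E \<and> H X = X}"

definition partial_transversal :: "'a set set \<Rightarrow> 'a set \<Rightarrow> bool" where
  "partial_transversal C I \<longleftrightarrow> (\<exists>f. inj_on f I \<and> (\<forall>x\<in>I. f x \<in> C \<and> x \<in> f x))"

definition ptrans :: "'a set set \<Rightarrow> 'a set \<Rightarrow> 'a set set" where
  "ptrans C E = {I. I \<subseteq> E \<and> partial_transversal C I}"

definition trank :: "'a set set \<Rightarrow> 'a set \<Rightarrow> nat" where
  "trank C X = Max {card I | I. I \<subseteq> X \<and> partial_transversal C I}"

definition tcl :: "'a set set \<Rightarrow> 'a set \<Rightarrow> 'a set \<Rightarrow> 'a set" where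
  "tcl C E X = {a \<in> E. trank C (insert a X) = trank C X}"

definition tflats :: "'a set set \<Rightarrow> 'a set \<Rightarrow> 'a set set" where
  "tflats C E = {X. X \<subseteq> E \<and> tcl C E X = X}"

end

theory Submission
  imports Defs
begin

locale part =
  fixes E :: "'a set" and C :: "'a set set"
  assumes P: "partition_on E C"
begin

lemma uniq: "K \<in> C \<Longrightarrow> K' \<in> C \<Longrightarrow> y \<in> K \<Longrightarrow> y \<in> K' \<Longrightarrow> K = K'"
  using partition_onD2[OF P] by (meson disjointD disjoint_iff)

lemma sub: "K \<in> C \<Longrightarrow> K \<subseteq> E"
  using partition_onD1[OF P] by blast

lemma ex: "x \<in> E \<Longrightarrow> \<exists>K\<in>C. x \<in> K"
  using partition_onD1[OF P] by blast

lemma ne: "K \<in> C \<Longrightarrow> K \<noteq> {}"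
  using partition_onD3[OF P] by blast

definition blk where "blk x = (THE K. K \<in> C \<and> x \<in> K)"

lemma blk_eq: "K \<in> C \<Longrightarrow> x \<in> K \<Longrightarrow> blk x = K"
  unfolding blk_def by (rule the_equality) (auto dest: uniq)

lemma blk: "x \<in> E \<Longrightarrow> blk x \<in> C \<and> x \<in> blk x"
  using ex blk_eq by metis

lemma SH_sub: "SH C X \<subseteq> E"
  unfolding SH_def using sub by blast

lemma Nbh_eq: "x \<in> E \<Longrightarrow> Nbh C x = blk x"
proof -
  assume x: "x \<in> E"
  have "{K \<in> C. x \<in> K} = {blk x}" using blk[OF x] uniq by blast
  thus ?thesis unfolding Nbh_def by simp
qed

lemma XH_eq: "X \<subseteq> E \<Longrightarrow> XH C E X = SH C X"
proof (intro set_eqI iffI)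
  fix y assume X: "X \<subseteq> E"
  { assume "y \<in> XH C E X"
    hence y: "y \<in> E" "blk y \<inter> X \<noteq> {}" unfolding XH_def using Nbh_eq by auto
    thus "y \<in> SH C X" unfolding SH_def using blk[OF y(1)] by blast }
  { assume "y \<in> SH C X"
    then obtain K where K: "K \<in> C" "y \<in> K" "K \<inter> X \<noteq> {}" unfolding SH_def by blast
    hence y: "y \<in> E" using sub by blast
    have "Nbh C y = K" using Nbh_eq[OF y] blk_eq[OF K(1,2)] by simp
    thus "y \<in> XH C E X" unfolding XH_def using y K by blast }
qed

lemma VH_eq: "X \<subseteq> E \<Longrightarrow> VH C E X = SH C X"
proof -
  assume X: "X \<subseteq> E"
  have "{Nbh C x | x. x \<in> E \<and> Nbh C x \<inter> X \<noteq> {}} = {K \<in> C. K \<inter> X \<noteq> {}}"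
  proof
    show "{Nbh C x | x. x \<in> E \<and> Nbh C x \<inter> X \<noteq> {}} \<subseteq> {K \<in> C. K \<inter> X \<noteq> {}}"
      using Nbh_eq blk by auto
  next
    show "{K \<in> C. K \<inter> X \<noteq> {}} \<subseteq> {Nbh C x | x. x \<in> E \<and> Nbh C x \<inter> X \<noteq> {}}"
    proof
      fix K assume K: "K \<in> {K \<in> C. K \<inter> X \<noteq> {}}"
      then obtain x where "x \<in> K" using ne by blast
      moreover have "x \<in> E" using K sub \<open>x \<in> K\<close> by blast
      ultimately show "K \<in> {Nbh C x | x. x \<in> E \<and> Nbh C x \<inter> X \<noteq> {}}"
        using K Nbh_eq blk_eq by (metis (mono_tags, lifting) mem_Collect_eq)
    qed
  qed
  thus ?thesis unfolding VH_def SH_def by simp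
qed

lemma mc: assumes H: "\<And>X. X \<subseteq> E \<Longrightarrow> H X = SH C X" shows "matroid_closure E H"
  unfolding matroid_closure_def
proof (intro conjI allI impI)
  fix X assume X: "X \<subseteq> E"
  show "X \<subseteq> H X" unfolding H[OF X] SH_def using X ex by blast
  show "H X \<subseteq> E" using H[OF X] SH_sub by simp
  have "SH C (SH C X) = SH C X"
  proof
    show "SH C (SH C X) \<subseteq> SH C X" unfolding SH_def using uniq by blast
    show "SH C X \<subseteq> SH C (SH C X)" unfolding SH_def by blast
  qed
  moreover have "H (H X) = SH C (SH C X)" using H[OF X] H[OF SH_sub[of X]] by (simp only:)
  ultimately show "H (H X) = H X" using H[OF X] by (simp only:)
next
  fix X Y assume XY: "X \<subseteq> Y \<and> Y \<subseteq> E"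
  hence "H X = SH C X" "H Y = SH C Y" using H by auto
  moreover have "SH C X \<subseteq> SH C Y" unfolding SH_def using XY by blast
  ultimately show "H X \<subseteq> H Y" by (simp only:)
next
  fix X x y assume a: "X \<subseteq> E \<and> x \<in> E \<and> y \<in> E \<and> y \<in> H (insert x X) \<and> y \<notin> H X"
  have e: "H (insert x X) = SH C (insert x X)" "H X = SH C X" "H (insert y X) = SH C (insert y X)"
    using H a by auto
  hence "y \<in> SH C (insert x X)" "y \<notin> SH C X" using a by auto
  hence "x \<in> SH C (insert y X)" unfolding SH_def by blast
  thus "x \<in> H (insert y X)" using e by simp
qed

lemma indep: assumes H: "\<And>X. X \<subseteq> E \<Longrightarrow> H X = SH C X" shows "indep_H E H = ptrans C E"
proof -
  have "indep_H E H = indep_H E (SH C)" unfolding indep_H_def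
  proof (intro Collect_cong conj_cong refl ball_cong)
    fix I x assume "I \<subseteq> E"
    hence "I - {x} \<subseteq> E" by blast
    thus "(x \<notin> H (I - {x})) = (x \<notin> SH C (I - {x}))" using H by simp
  qed
  moreover have "indep_H E (SH C) = ptrans C E"
  proof (intro set_eqI iffI)
    fix I assume "I \<in> indep_H E (SH C)"
    hence I: "I \<subseteq> E" "\<And>x. x \<in> I \<Longrightarrow> x \<notin> SH C (I - {x})" unfolding indep_H_def by auto
    have "inj_on blk I"
    proof (rule inj_onI, rule ccontr)
      fix x y assume xy: "x \<in> I" "y \<in> I" "blk x = blk y" "x \<noteq> y"
      have "y \<in> SH C (I - {y})" unfolding SH_def using xy blk[of x] blk[of y] I(1) by blast
      thus False using I(2)[OF xy(2)] by simp
    qed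
    thus "I \<in> ptrans C E" unfolding ptrans_def partial_transversal_def using I blk by blast
  next
    fix I assume "I \<in> ptrans C E"
    then obtain f where I: "I \<subseteq> E" "inj_on f I" "\<And>x. x \<in> I \<Longrightarrow> f x \<in> C \<and> x \<in> f x"
      unfolding ptrans_def partial_transversal_def by blast
    have "x \<notin> SH C (I - {x})" if x: "x \<in> I" for x
    proof
      assume "x \<in> SH C (I - {x})"
      then obtain K y where K: "K \<in> C" "x \<in> K" "y \<in> K" "y \<in> I" "y \<noteq> x" unfolding SH_def by blast
      have "f x = K" using uniq I(3)[OF x] K by blast
      moreover have "f y = K" using uniq I(3)[OF K(4)] K by blast
      ultimately show False using I(2) x K inj_onD by metis
    qed
    thus "I \<in> indep_H E (SH C)" unfolding indep_H_def using I by blast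
  qed
  ultimately show ?thesis by simp
qed

definition B where "B X = {K \<in> C. K \<inter> X \<noteq> {}}"

lemma trank_eq: assumes fin: "finite E" and X: "X \<subseteq> E" shows "trank C X = card (B X)"
proof -
  have finC: "finite C" using finite_elements[OF fin P] .
  have finB: "finite (B X)" using finC unfolding B_def by simp
  let ?S = "{card I | I. I \<subseteq> X \<and> partial_transversal C I}"
  have le: "n \<le> card (B X)" if "n \<in> ?S" for n
  proof -
    obtain I where I0: "n = card I" "I \<subseteq> X" "partial_transversal C I"
      using \<open>n \<in> ?S\<close> by blast
    then obtain f where I: "n = card I" "I \<subseteq> X" "inj_on f I" "\<And>x. x \<in> I \<Longrightarrow> f x \<in> C \<and> x \<in> f x"
      unfolding partial_transversal_def by blast
    have "f ` I \<subseteq> B X" unfolding B_def using I by blast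
    hence "card (f ` I) \<le> card (B X)" using finB card_mono by blast
    thus ?thesis using I card_image by metis
  qed
  define g where "g K = (SOME x. x \<in> K \<inter> X)" for K
  have g: "g K \<in> K \<inter> X" if "K \<in> B X" for K
  proof -
    have "\<exists>x. x \<in> K \<inter> X" using that unfolding B_def by blast
    thus ?thesis unfolding g_def by (rule someI_ex)
  qed
  have gE: "g K \<in> E" if "K \<in> B X" for K using g[OF that] X by blast
  have bg: "blk (g K) = K" if "K \<in> B X" for K using g[OF that] that blk_eq unfolding B_def by blast
  have injg: "inj_on g (B X)" by (rule inj_onI) (metis bg)
  have pt: "partial_transversal C (g ` B X)" unfolding partial_transversal_def
  proof (intro exI conjI ballI)
    show "inj_on blk (g ` B X)" by (rule inj_onI) (auto simp: bg)
  next
    fix x assume "x \<in> g ` B X"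
    then obtain K where "K \<in> B X" "x = g K" by blast
    thus "blk x \<in> C" "x \<in> blk x" using bg g unfolding B_def by auto
  qed
  have gX: "g ` B X \<subseteq> X" using g by blast
  have "card (B X) = card (g ` B X)" using card_image[OF injg] by simp
  hence "card (B X) \<in> ?S" using gX pt by blast
  moreover have "finite ?S" by (rule finite_subset[of _ "{..card (B X)}"]) (use le in auto)
  ultimately show ?thesis unfolding trank_def using le by (intro Max_eqI) auto
qed

lemma tcl_eq: assumes fin: "finite E" and X: "X \<subseteq> E" shows "tcl C E X = SH C X"
proof (intro set_eqI iffI)
  have finB: "finite (B Y)" for Y using finite_elements[OF fin P] unfolding B_def by simp
  fix a
  {
    assume a: "a \<in> tcl C E X"
    hence aE: "a \<in> E" and eq: "card (B (insert a X)) = card (B X)"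
      unfolding tcl_def using trank_eq[OF fin] X by auto
    show "a \<in> SH C X"
    proof (rule ccontr)
      assume n: "a \<notin> SH C X"
      have "B (insert a X) = insert (blk a) (B X)" unfolding B_def using blk[OF aE] uniq by blast
      moreover have "blk a \<notin> B X" using n blk[OF aE] unfolding B_def SH_def by blast
      ultimately show False using eq finB by simp
    qed
  }
  {
    assume a: "a \<in> SH C X"
    hence aE: "a \<in> E" using SH_sub by blast
    have "B (insert a X) = B X" using a unfolding B_def SH_def using uniq by blast
    thus "a \<in> tcl C E X" unfolding tcl_def using trank_eq[OF fin] X aE by auto
  }
qed

lemma flats: assumes fin: "finite E" and H: "\<And>X. X \<subseteq> E \<Longrightarrow> H X = SH C X"
  shows "closed_H E H = tflats C E"
  unfolding closed_H_def tflats_def using H tcl_eq[OF fin] by auto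

end

theorem theorem13:
  fixes E :: "'a set" and C :: "'a set set"
  assumes "finite E" and "partition_on E C"
  shows "matroid_closure E (SH C) \<and> matroid_closure E (XH C E) \<and> matroid_closure E (VH C E)
    \<and> indep_H E (SH C) = ptrans C E \<and> indep_H E (XH C E) = ptrans C E
    \<and> indep_H E (VH C E) = ptrans C E
    \<and> closed_H E (SH C) = tflats C E \<and> closed_H E (XH C E) = tflats C E
    \<and> closed_H E (VH C E) = tflats C E"
proof -
  interpret part E C using assms(2) by unfold_locales
  have h1: "\<And>X. X \<subseteq> E \<Longrightarrow> SH C X = SH C X" by simp
  show ?thesis using mc[OF h1] mc[OF XH_eq] mc[OF VH_eq] indep[OF h1] indep[OF XH_eq] indep[OF VH_eq]
      flats[OF assms(1) h1] flats[OF assms(1) XH_eq] flats[OF assms(1) VH_eq] by blast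
qed

end
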